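(* Consider the problem of minimizing $f(x)$ over $x\in Q$ subject to $g(x)\le0$, where $f,g:Q\to\mathbb{R}$ are convex, and let $x_*$ be a solution. Let $\delta\ge0$, $\varepsilon>0$, suppose $\|\nabla_\delta g(x)\|_*\le M_g$ for all $x\in Q$, let $x^0=\arg\min_{x\in Q}d(x)$ and let $\Theta_0>0$ satisfy $V(x_*,x^0)\le\Theta_0^2$. Run the following Algorithm C: set $I=\emptyset$; for $N=0,1,2,\dots$: if $g(x^N)\le\varepsilon\|\nabla_\delta g(x^N)\|_*+\delta$ (productive step), put $h_N=\varepsilon/\|\nabla_\delta f(x^N)\|_*$, $x^{N+1}=\mathrm{Mirr}_{x^N}(h_N\nabla_\delta f(x^N))$ and add $N$ to $I$; otherwise (non-productive step), put $h_N=\varepsilon/\|\nabla_\delta g(x^N)\|_*$ and $x^{N+1}=\mathrm{Mirr}_{x^N}(h_N\nabla_\delta g(x^N))$. Stop as soon as the total number $N$ of performed iterations satisfies $N\ge 2\Theta_0^2/\varepsilon^2$. Assume that $\nabla_\delta f(x^k)\ne0$ at every productive step. Then, when the algorithm stops, $I\ne\emptyset$ and $$\min_{k\in I}v_f^\delta(x^k,x_* )\le\varepsilon,\qquad \max_{k\in I}g(x^k)\le M_g\varepsilon+\delta.$$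
   Context: $Q\subseteq\mathbb{R}^n$ is closed and convex; $\|\cdot\|$ is a norm on $\mathbb{R}^n$, $\|\cdot\|_*$ its dual norm. For a convex function $\varphi$ on $Q$ and $\delta\ge0$, a $\delta$-subgradient of $\varphi$ at $x\in Q$ is a vector $\nabla_\delta\varphi(x)$ with $\varphi(y)-\varphi(x)\ge\langle\nabla_\delta\varphi(x),y-x\rangle-\delta$ for all $y\in Q$; for each $x$ one such vector is fixed and used throughout. $v_f^\delta(x,y)=\big\langle\nabla_\delta f(x)/\|\nabla_\delta f(x)\|_*,\ x-y\big\rangle$ if $\nabla_\delta f(x)\ne0$ and $v_f^\delta(x,y)=0$ otherwise. $d:Q\to\mathbb{R}$ is differentiable and 1-strongly convex on $Q$ w.r.t. $\|\cdot\|$; $V(y,x)=d(y)-d(x)-\langle\nabla d(x),y-x\rangle$; $\mathrm{Mirr}_x(p)=\arg\min_{u\in Q}\{\langle p,u\rangle+V(u,x)\}$. *)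

theory Defs
  imports "HOL-Analysis.Analysis"
begin

definition is_norm :: "('a::euclidean_space \<Rightarrow> real) \<Rightarrow> bool" where
  "is_norm nrm \<longleftrightarrow>
     (\<forall>x. 0 \<le> nrm x) \<and> (\<forall>x. nrm x = 0 \<longleftrightarrow> x = 0) \<and>
     (\<forall>c x. nrm (c *\<^sub>R x) = \<bar>c\<bar> * nrm x) \<and>
     (\<forall>x y. nrm (x + y) \<le> nrm x + nrm y)"

definition dual_norm :: "('a::euclidean_space \<Rightarrow> real) \<Rightarrow> 'a \<Rightarrow> real" where
  "dual_norm nrm p = Sup {p \<bullet> u | u. nrm u \<le> 1}"

definition is_delta_subgrad :: "'a::euclidean_space set \<Rightarrow> ('a \<Rightarrow> real) \<Rightarrow> real \<Rightarrow> 'a \<Rightarrow> 'a \<Rightarrow> bool" where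
  "is_delta_subgrad Q phi \<delta> x p \<longleftrightarrow> (\<forall>y\<in>Q. phi y - phi x \<ge> p \<bullet> (y - x) - \<delta>)"

definition v_delta :: "('a::euclidean_space \<Rightarrow> real) \<Rightarrow> ('a \<Rightarrow> 'a) \<Rightarrow> 'a \<Rightarrow> 'a \<Rightarrow> real" where
  "v_delta nrm gf x y = (if gf x \<noteq> 0 then (gf x /\<^sub>R dual_norm nrm (gf x)) \<bullet> (x - y) else 0)"

definition strongly_convex_1 :: "('a::euclidean_space \<Rightarrow> real) \<Rightarrow> 'a set \<Rightarrow> ('a \<Rightarrow> real) \<Rightarrow> bool" where
  "strongly_convex_1 nrm Q d \<longleftrightarrow>
     (\<forall>x\<in>Q. \<forall>y\<in>Q. \<forall>t::real. 0 \<le> t \<and> t \<le> 1 \<longrightarrow>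
        d (t *\<^sub>R x + (1 - t) *\<^sub>R y) \<le> t * d x + (1 - t) * d y - t * (1 - t) / 2 * (nrm (x - y))\<^sup>2)"

definition bregman :: "('a::euclidean_space \<Rightarrow> real) \<Rightarrow> ('a \<Rightarrow> 'a) \<Rightarrow> 'a \<Rightarrow> 'a \<Rightarrow> real" where
  "bregman d dd y x = d y - d x - dd x \<bullet> (y - x)"

definition is_mirr :: "'a::euclidean_space set \<Rightarrow> ('a \<Rightarrow> real) \<Rightarrow> ('a \<Rightarrow> 'a) \<Rightarrow> 'a \<Rightarrow> 'a \<Rightarrow> 'a \<Rightarrow> bool" where
  "is_mirr Q d dd x p u \<longleftrightarrow> u \<in> Q \<and>
     (\<forall>w\<in>Q. p \<bullet> u + bregman d dd u x \<le> p \<bullet> w + bregman d dd w x)"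

definition productive :: "('a::euclidean_space \<Rightarrow> real) \<Rightarrow> ('a \<Rightarrow> real) \<Rightarrow> ('a \<Rightarrow> 'a) \<Rightarrow> real \<Rightarrow> real \<Rightarrow> 'a \<Rightarrow> bool" where
  "productive nrm g gg \<epsilon> \<delta> x \<longleftrightarrow> g x \<le> \<epsilon> * dual_norm nrm (gg x) + \<delta>"

definition stop_iter :: "real \<Rightarrow> real \<Rightarrow> nat" where
  "stop_iter \<Theta>0 \<epsilon> = (LEAST N::nat. real N \<ge> 2 * \<Theta>0\<^sup>2 / \<epsilon>\<^sup>2)"

end

theory Submission
  imports Defs
begin

lemma nrm_neg: "is_norm nrm \<Longrightarrow> nrm (- v) = nrm v"
  using is_norm_def[of nrm] by (metis abs_minus_cancel abs_one mult_1 scaleR_minus1_left)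

lemma nrm_lower:
  fixes nrm :: "'a::euclidean_space \<Rightarrow> real"
  assumes n: "is_norm nrm" shows "\<exists>m>0. \<forall>u. m * norm u \<le> nrm u"
proof -
  have cv: "convex_on UNIV nrm"
    unfolding convex_on_def
  proof (intro conjI ballI allI impI convex_UNIV)
    fix x y :: 'a and u v :: real assume "u \<ge> 0" "v \<ge> 0" "u + v = 1"
    then show "nrm (u *\<^sub>R x + v *\<^sub>R y) \<le> u * nrm x + v * nrm y"
      using n unfolding is_norm_def by (metis abs_of_nonneg order_trans order_refl)
  qed
  hence ct: "continuous_on (sphere 0 1) nrm"
    using convex_on_continuous[of UNIV nrm] continuous_on_subset by blast
  obtain x0 where x0: "x0 \<in> sphere (0::'a) 1" "\<forall>y\<in>sphere 0 1. nrm x0 \<le> nrm y"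
    using continuous_attains_inf[OF compact_sphere _ ct] sphere_eq_empty[of "0::'a" 1] by auto
  have "x0 \<noteq> 0" using x0 by auto
  hence m: "nrm x0 > 0" using n unfolding is_norm_def by (metis order_le_less)
  show ?thesis
  proof (intro exI[of _ "nrm x0"] conjI m allI)
    fix u :: 'a
    show "nrm x0 * norm u \<le> nrm u"
    proof (cases "u = 0")
      case True then show ?thesis using n by (simp add: is_norm_def)
    next
      case False
      have "(1 / norm u) *\<^sub>R u \<in> sphere 0 1" using False by simp
      hence "nrm x0 \<le> nrm ((1 / norm u) *\<^sub>R u)" using x0 by blast
      also have "\<dots> = nrm u / norm u" using n unfolding is_norm_def by simp
      finally show ?thesis using False by (simp add: field_simps)
    qed
  qed
qed

lemma dual_bdd:
  fixes nrm :: "'a::euclidean_space \<Rightarrow> real"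
  assumes n: "is_norm nrm" shows "bdd_above {p \<bullet> u | u. nrm u \<le> 1}"
proof -
  obtain m where m: "m > 0" "\<forall>u. m * norm u \<le> nrm u" using nrm_lower[OF n] by blast
  show ?thesis unfolding bdd_above_def
  proof (intro exI[of _ "norm p / m"] ballI)
    fix y assume "y \<in> {p \<bullet> u | u. nrm u \<le> 1}"
    then obtain u where u: "y = p \<bullet> u" "nrm u \<le> 1" by blast
    have "norm u \<le> 1 / m" using m u by (smt (verit) mult_imp_le_div_pos mult.commute)
    have "y \<le> norm p * norm u" using u Cauchy_Schwarz_ineq2 by (smt (verit) norm_cauchy_schwarz)
    also have "\<dots> \<le> norm p * (1/m)" by (rule mult_left_mono) (use \<open>norm u \<le> 1/m\<close> in auto)
    finally show "y \<le> norm p / m" by simp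
  qed
qed

lemma dual_ineq:
  fixes nrm :: "'a::euclidean_space \<Rightarrow> real"
  assumes n: "is_norm nrm" shows "p \<bullet> w \<le> dual_norm nrm p * nrm w"
proof (cases "w = 0")
  case True
  have "nrm 0 = 0" using n unfolding is_norm_def by blast
  with True show ?thesis by simp
next
  case False
  hence pos: "nrm w > 0" using n unfolding is_norm_def by (metis order_le_less)
  have "nrm ((1 / nrm w) *\<^sub>R w) = 1" using n pos False unfolding is_norm_def by simp
  hence mem: "p \<bullet> ((1 / nrm w) *\<^sub>R w) \<in> {p \<bullet> u | u. nrm u \<le> 1}" by fastforce
  have "p \<bullet> ((1 / nrm w) *\<^sub>R w) \<le> dual_norm nrm p"
    unfolding dual_norm_def by (rule cSup_upper[OF mem dual_bdd[OF n]])
  then show ?thesis using pos by (simp add: field_simps)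
qed

lemma dual_pos:
  fixes nrm :: "'a::euclidean_space \<Rightarrow> real"
  assumes n: "is_norm nrm" and p: "p \<noteq> 0" shows "dual_norm nrm p > 0"
proof -
  have pos: "nrm p > 0" using n p unfolding is_norm_def by (metis order_le_less)
  have "nrm ((1 / nrm p) *\<^sub>R p) = 1" using n pos p unfolding is_norm_def by simp
  hence mem: "p \<bullet> ((1 / nrm p) *\<^sub>R p) \<in> {p \<bullet> u | u. nrm u \<le> 1}" by fastforce
  have "p \<bullet> ((1 / nrm p) *\<^sub>R p) \<le> dual_norm nrm p"
    unfolding dual_norm_def by (rule cSup_upper[OF mem dual_bdd[OF n]])
  moreover have "p \<bullet> ((1 / nrm p) *\<^sub>R p) > 0" using p pos by simp
  ultimately show ?thesis by linarith
qed

lemma dual_zero: assumes n: "is_norm nrm" shows "dual_norm nrm 0 = 0"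
proof -
  have "nrm 0 = 0" using n unfolding is_norm_def by blast
  hence "{0 \<bullet> u | u. nrm u \<le> 1} = {0::real}" by (intro set_eqI) (auto intro!: exI[of _ 0])
  thus ?thesis unfolding dual_norm_def by simp
qed

lemma path_deriv:
  fixes d :: "'a::euclidean_space \<Rightarrow> real"
  assumes Q: "convex Q" and a: "a \<in> Q" and b: "b \<in> Q"
    and d_diff: "\<forall>y\<in>Q. (d has_derivative (\<lambda>h. dd y \<bullet> h)) (at y within Q)"
  shows "((\<lambda>t. (d (a + t *\<^sub>R (b - a)) - d a) / t) \<longlongrightarrow> dd a \<bullet> (b - a)) (at 0 within {0..1})"
proof -
  let ?g = "\<lambda>t::real. a + t *\<^sub>R (b - a)"
  have g: "(?g has_derivative (\<lambda>t. t *\<^sub>R (b - a))) (at 0 within {0..1})"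
    by (auto intro!: derivative_eq_intros)
  have sub: "?g ` {0..1} \<subseteq> Q"
  proof
    fix y assume "y \<in> ?g ` {0..1}"
    then obtain t where t: "t \<in> {0..1}" "y = ?g t" by blast
    have "y = (1 - t) *\<^sub>R a + t *\<^sub>R b" using t by (simp add: algebra_simps)
    thus "y \<in> Q" using Q a b t unfolding convex_def by auto
  qed
  have dd: "(d has_derivative (\<lambda>h. dd a \<bullet> h)) (at (?g 0) within ?g ` {0..1})"
    using has_derivative_subset[OF d_diff[rule_format, OF a] sub] by simp
  have "((d \<circ> ?g) has_derivative ((\<lambda>h. dd a \<bullet> h) \<circ> (\<lambda>t. t *\<^sub>R (b - a)))) (at 0 within {0..1})"
    by (rule diff_chain_within[OF g dd])
  moreover have "((\<lambda>h. dd a \<bullet> h) \<circ> (\<lambda>t. t *\<^sub>R (b - a))) = (*) (dd a \<bullet> (b - a))"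
    by (auto simp: fun_eq_iff)
  ultimately have "((d \<circ> ?g) has_field_derivative (dd a \<bullet> (b - a))) (at 0 within {0..1})"
    unfolding has_field_derivative_def by simp
  thus ?thesis unfolding has_field_derivative_iff by (simp add: o_def)
qed

lemma at01_nontriv: "at (0::real) within {0..1} \<noteq> bot"
  by (simp add: at_within_Icc_at_right)

lemma breg_lb:
  fixes d :: "'a::euclidean_space \<Rightarrow> real"
  assumes Q: "convex Q" and a: "a \<in> Q" and b: "b \<in> Q"
    and d_diff: "\<forall>y\<in>Q. (d has_derivative (\<lambda>h. dd y \<bullet> h)) (at y within Q)"
    and d_sc: "strongly_convex_1 nrm Q d"
  shows "bregman d dd a b \<ge> (nrm (a - b))\<^sup>2 / 2"
proof -
  let ?n = "(nrm (a - b))\<^sup>2"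
  have lim1: "((\<lambda>t. (d (b + t *\<^sub>R (a - b)) - d b) / t) \<longlongrightarrow> dd b \<bullet> (a - b)) (at 0 within {0..1})"
    by (rule path_deriv[OF Q b a d_diff])
  have lim2: "((\<lambda>t::real. d a - d b - (1 - t) / 2 * ?n) \<longlongrightarrow> d a - d b - (1 - 0) / 2 * ?n) (at 0 within {0..1})"
    by (intro tendsto_intros) auto
  have ev: "\<forall>\<^sub>F t in at 0 within {0..1}. (d (b + t *\<^sub>R (a - b)) - d b) / t \<le> d a - d b - (1 - t) / 2 * ?n"
    unfolding eventually_at_filter
  proof (intro always_eventually allI impI)
    fix t :: real assume t: "t \<noteq> 0" "t \<in> {0..1}"
    hence tp: "t > 0" by auto
    have eq: "b + t *\<^sub>R (a - b) = t *\<^sub>R a + (1 - t) *\<^sub>R b" by (simp add: algebra_simps)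
    have "d (t *\<^sub>R a + (1 - t) *\<^sub>R b) \<le> t * d a + (1 - t) * d b - t * (1 - t) / 2 * ?n"
      using d_sc a b t unfolding strongly_convex_1_def by auto
    hence "d (b + t *\<^sub>R (a - b)) - d b \<le> t * (d a - d b - (1 - t) / 2 * ?n)"
      unfolding eq by (simp add: algebra_simps)
    thus "(d (b + t *\<^sub>R (a - b)) - d b) / t \<le> d a - d b - (1 - t) / 2 * ?n"
      using tp by (simp add: divide_le_eq mult.commute)
  qed
  have "dd b \<bullet> (a - b) \<le> d a - d b - (1 - 0) / 2 * ?n"
    by (rule tendsto_le[OF at01_nontriv lim2 lim1 ev])
  thus ?thesis unfolding bregman_def by simp
qed

lemma opt_cond:
  fixes d :: "'a::euclidean_space \<Rightarrow> real"
  assumes Q: "convex Q" and z: "z \<in> Q"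
    and d_diff: "\<forall>y\<in>Q. (d has_derivative (\<lambda>h. dd y \<bullet> h)) (at y within Q)"
    and mirr: "is_mirr Q d dd x p u"
  shows "(p + dd u - dd x) \<bullet> (z - u) \<ge> 0"
proof -
  have u: "u \<in> Q" using mirr unfolding is_mirr_def by blast
  let ?c = "- ((p - dd x) \<bullet> (z - u))"
  have lim1: "((\<lambda>t. (d (u + t *\<^sub>R (z - u)) - d u) / t) \<longlongrightarrow> dd u \<bullet> (z - u)) (at 0 within {0..1})"
    by (rule path_deriv[OF Q u z d_diff])
  have ev: "\<forall>\<^sub>F t in at 0 within {0..1}. ?c \<le> (d (u + t *\<^sub>R (z - u)) - d u) / t"
    unfolding eventually_at_filter
  proof (intro always_eventually allI impI)
    fix t :: real assume t: "t \<noteq> 0" "t \<in> {0..1}"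
    hence tp: "t > 0" by auto
    let ?w = "u + t *\<^sub>R (z - u)"
    have "?w = (1 - t) *\<^sub>R u + t *\<^sub>R z" by (simp add: algebra_simps)
    hence wQ: "?w \<in> Q" using Q u z t unfolding convex_def by auto
    have "p \<bullet> u + bregman d dd u x \<le> p \<bullet> ?w + bregman d dd ?w x"
      using mirr wQ unfolding is_mirr_def by blast
    moreover have "p \<bullet> ?w = p \<bullet> u + t * (p \<bullet> (z - u))" by (simp add: inner_add_right)
    moreover have "dd x \<bullet> (?w - x) = dd x \<bullet> (u - x) + t * (dd x \<bullet> (z - u))"
      by (simp add: inner_add_right inner_diff_right)
    moreover have "t * ((p - dd x) \<bullet> (z - u)) = t * (p \<bullet> (z - u)) - t * (dd x \<bullet> (z - u))"
      by (simp add: inner_diff_left right_diff_distrib)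
    ultimately have "0 \<le> t * ((p - dd x) \<bullet> (z - u)) + (d ?w - d u)"
      unfolding bregman_def by linarith
    hence "t * ?c \<le> d ?w - d u" by (simp add: algebra_simps)
    thus "?c \<le> (d ?w - d u) / t" using tp by (simp add: le_divide_eq mult.commute)
  qed
  have "?c \<le> dd u \<bullet> (z - u)"
    by (rule tendsto_lowerbound[OF lim1 ev at01_nontriv])
  moreover have "(p + dd u - dd x) \<bullet> (z - u) = (p - dd x) \<bullet> (z - u) + dd u \<bullet> (z - u)"
    by (simp add: inner_add_left inner_diff_left)
  ultimately show ?thesis by linarith
qed

lemma mirror_step:
  fixes d :: "'a::euclidean_space \<Rightarrow> real"
  assumes Q: "convex Q" and n: "is_norm nrm" and x: "x \<in> Q" and z: "z \<in> Q"
    and d_diff: "\<forall>y\<in>Q. (d has_derivative (\<lambda>h. dd y \<bullet> h)) (at y within Q)"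
    and d_sc: "strongly_convex_1 nrm Q d"
    and mirr: "is_mirr Q d dd x p u"
    and L: "\<forall>w. p \<bullet> w \<le> L * nrm w"
  shows "p \<bullet> (x - z) \<le> L\<^sup>2 / 2 + bregman d dd z x - bregman d dd z u"
proof -
  have u: "u \<in> Q" using mirr unfolding is_mirr_def by blast
  have opt: "(p + dd u - dd x) \<bullet> (z - u) \<ge> 0" by (rule opt_cond[OF Q z d_diff mirr])
  have id: "bregman d dd z x - bregman d dd z u - bregman d dd u x = (dd u - dd x) \<bullet> (z - u)"
    unfolding bregman_def inner_diff_right inner_diff_left by linarith
  have bl: "bregman d dd u x \<ge> (nrm (u - x))\<^sup>2 / 2" by (rule breg_lb[OF Q u x d_diff d_sc])
  have nn: "nrm (x - u) = nrm (u - x)" using nrm_neg[OF n, of "u - x"] by simp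
  have pl: "p \<bullet> (x - u) \<le> L * nrm (u - x)" using L nn by metis
  have sq: "L * nrm (u - x) \<le> L\<^sup>2 / 2 + (nrm (u - x))\<^sup>2 / 2"
  proof -
    have "0 \<le> (L - nrm (u - x))\<^sup>2" by simp
    thus ?thesis unfolding power2_diff by linarith
  qed
  have "p \<bullet> (x - z) = p \<bullet> (x - u) - p \<bullet> (z - u)" by (simp add: inner_diff_right)
  also have "\<dots> \<le> p \<bullet> (x - u) + (dd u - dd x) \<bullet> (z - u)"
    using opt by (simp add: inner_add_left inner_diff_left)
  finally show ?thesis using id bl pl sq by linarith
qed

theorem theorem3:
  fixes Q :: "'a::euclidean_space set"
    and nrm :: "'a \<Rightarrow> real"
    and f g d :: "'a \<Rightarrow> real"
    and gf gg dd :: "'a \<Rightarrow> 'a"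
    and xs :: 'a
    and x :: "nat \<Rightarrow> 'a"
    and \<delta> \<epsilon> Mg \<Theta>0 :: real
  assumes Q: "closed Q" "convex Q"
    and nrm: "is_norm nrm"
    and fg_convex: "convex_on Q f" "convex_on Q g"
    and sol: "xs \<in> Q" "g xs \<le> 0" "\<forall>y\<in>Q. g y \<le> 0 \<longrightarrow> f xs \<le> f y"
    and \<delta>: "\<delta> \<ge> 0" and \<epsilon>: "\<epsilon> > 0"
    and gf: "\<forall>y\<in>Q. is_delta_subgrad Q f \<delta> y (gf y)"
    and gg: "\<forall>y\<in>Q. is_delta_subgrad Q g \<delta> y (gg y)"
    and Mg: "\<forall>y\<in>Q. dual_norm nrm (gg y) \<le> Mg"
    and d_diff: "\<forall>y\<in>Q. (d has_derivative (\<lambda>h. dd y \<bullet> h)) (at y within Q)"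
    and d_sc: "strongly_convex_1 nrm Q d"
    and x0: "x 0 \<in> Q" "\<forall>y\<in>Q. d (x 0) \<le> d y"
    and \<Theta>0: "\<Theta>0 > 0" "bregman d dd xs (x 0) \<le> \<Theta>0\<^sup>2"
    and step_prod: "\<forall>N < stop_iter \<Theta>0 \<epsilon>. productive nrm g gg \<epsilon> \<delta> (x N) \<longrightarrow>
          is_mirr Q d dd (x N) ((\<epsilon> / dual_norm nrm (gf (x N))) *\<^sub>R gf (x N)) (x (Suc N))"
    and step_nonprod: "\<forall>N < stop_iter \<Theta>0 \<epsilon>. \<not> productive nrm g gg \<epsilon> \<delta> (x N) \<longrightarrow>
          is_mirr Q d dd (x N) ((\<epsilon> / dual_norm nrm (gg (x N))) *\<^sub>R gg (x N)) (x (Suc N))"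
    and gf_nz: "\<forall>N < stop_iter \<Theta>0 \<epsilon>. productive nrm g gg \<epsilon> \<delta> (x N) \<longrightarrow> gf (x N) \<noteq> 0"
  defines "I \<equiv> {k. k < stop_iter \<Theta>0 \<epsilon> \<and> productive nrm g gg \<epsilon> \<delta> (x k)}"
  shows "I \<noteq> {} \<and>
         Min ((\<lambda>k. v_delta nrm gf (x k) xs) ` I) \<le> \<epsilon> \<and>
         Max ((\<lambda>k. g (x k)) ` I) \<le> Mg * \<epsilon> + \<delta>"
proof -
  define N where "N = stop_iter \<Theta>0 \<epsilon>"
  define V where "V k = bregman d dd xs (x k)" for k
  have I_def': "I = {k. k < N \<and> productive nrm g gg \<epsilon> \<delta> (x k)}" using I_def N_def by simp
  obtain n0 :: nat where "2 * \<Theta>0\<^sup>2 / \<epsilon>\<^sup>2 \<le> real n0" using real_arch_simple by blast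
  hence Nge: "2 * \<Theta>0\<^sup>2 / \<epsilon>\<^sup>2 \<le> real N" unfolding N_def stop_iter_def by (rule LeastI)
  have pos: "2 * \<Theta>0\<^sup>2 / \<epsilon>\<^sup>2 > 0" using \<Theta>0 \<epsilon> by simp
  hence Npos: "N > 0" using Nge by (metis of_nat_0 gr0I less_le_trans order_less_irrefl)
  have NT: "real N * \<epsilon>\<^sup>2 \<ge> 2 * \<Theta>0\<^sup>2" using Nge \<epsilon> by (simp add: divide_le_eq)
  have xQ: "k \<le> N \<Longrightarrow> x k \<in> Q" for k
  proof (induction k)
    case 0 then show ?case using x0 by simp
  next
    case (Suc k)
    hence k: "k < N" by simp
    show ?case
    proof (cases "productive nrm g gg \<epsilon> \<delta> (x k)")
      case True then show ?thesis using step_prod k unfolding N_def is_mirr_def by blast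
    next
      case False then show ?thesis using step_nonprod k unfolding N_def is_mirr_def by blast
    qed
  qed
  have prodk: "\<epsilon> * v_delta nrm gf (x k) xs \<le> \<epsilon>\<^sup>2 / 2 + V k - V (Suc k)"
    if k: "k < N" and pr: "productive nrm g gg \<epsilon> \<delta> (x k)" for k
  proof -
    let ?G = "gf (x k)"
    let ?D = "dual_norm nrm ?G"
    have G: "?G \<noteq> 0" using gf_nz k pr unfolding N_def by blast
    have D: "?D > 0" by (rule dual_pos[OF nrm G])
    have m: "is_mirr Q d dd (x k) ((\<epsilon> / ?D) *\<^sub>R ?G) (x (Suc k))"
      using step_prod k pr unfolding N_def by blast
    have L: "\<forall>w. ((\<epsilon> / ?D) *\<^sub>R ?G) \<bullet> w \<le> \<epsilon> * nrm w"
    proof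
      fix w
      have "((\<epsilon> / ?D) *\<^sub>R ?G) \<bullet> w = (\<epsilon> / ?D) * (?G \<bullet> w)" by simp
      also have "\<dots> \<le> (\<epsilon> / ?D) * (?D * nrm w)"
        by (rule mult_left_mono[OF dual_ineq[OF nrm]]) (use \<epsilon> D in simp)
      also have "\<dots> = \<epsilon> * nrm w" using D by simp
      finally show "((\<epsilon> / ?D) *\<^sub>R ?G) \<bullet> w \<le> \<epsilon> * nrm w" .
    qed
    have "((\<epsilon> / ?D) *\<^sub>R ?G) \<bullet> (x k - xs) \<le> \<epsilon>\<^sup>2 / 2 + V k - V (Suc k)"
      unfolding V_def by (rule mirror_step[OF Q(2) nrm xQ sol(1) d_diff d_sc m L]) (use k in simp)
    moreover have "((\<epsilon> / ?D) *\<^sub>R ?G) \<bullet> (x k - xs) = \<epsilon> * v_delta nrm gf (x k) xs"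
      unfolding v_delta_def using G by (simp add: field_simps)
    ultimately show ?thesis by simp
  qed
  have nonprodk: "\<epsilon>\<^sup>2 < \<epsilon>\<^sup>2 / 2 + V k - V (Suc k)"
    if k: "k < N" and pr: "\<not> productive nrm g gg \<epsilon> \<delta> (x k)" for k
  proof -
    let ?G = "gg (x k)"
    let ?D = "dual_norm nrm ?G"
    have xk: "x k \<in> Q" using xQ k by simp
    have "g xs - g (x k) \<ge> ?G \<bullet> (xs - x k) - \<delta>" using gg xk sol(1) unfolding is_delta_subgrad_def by blast
    moreover have "?G \<bullet> (xs - x k) = - (?G \<bullet> (x k - xs))" by (simp add: inner_diff_right)
    moreover have "g (x k) > \<epsilon> * ?D + \<delta>" using pr unfolding productive_def by simp
    ultimately have gt: "?G \<bullet> (x k - xs) > \<epsilon> * ?D" using sol(2) by linarith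
    have G: "?G \<noteq> 0"
    proof
      assume "?G = 0"
      then show False using gt dual_zero[OF nrm] by simp
    qed
    have D: "?D > 0" by (rule dual_pos[OF nrm G])
    have m: "is_mirr Q d dd (x k) ((\<epsilon> / ?D) *\<^sub>R ?G) (x (Suc k))"
      using step_nonprod k pr unfolding N_def by blast
    have L: "\<forall>w. ((\<epsilon> / ?D) *\<^sub>R ?G) \<bullet> w \<le> \<epsilon> * nrm w"
    proof
      fix w
      have "((\<epsilon> / ?D) *\<^sub>R ?G) \<bullet> w = (\<epsilon> / ?D) * (?G \<bullet> w)" by simp
      also have "\<dots> \<le> (\<epsilon> / ?D) * (?D * nrm w)"
        by (rule mult_left_mono[OF dual_ineq[OF nrm]]) (use \<epsilon> D in simp)
      also have "\<dots> = \<epsilon> * nrm w" using D by simp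
      finally show "((\<epsilon> / ?D) *\<^sub>R ?G) \<bullet> w \<le> \<epsilon> * nrm w" .
    qed
    have up: "((\<epsilon> / ?D) *\<^sub>R ?G) \<bullet> (x k - xs) \<le> \<epsilon>\<^sup>2 / 2 + V k - V (Suc k)"
      unfolding V_def by (rule mirror_step[OF Q(2) nrm xk sol(1) d_diff d_sc m L])
    have "(\<epsilon> / ?D) * (\<epsilon> * ?D) < (\<epsilon> / ?D) * (?G \<bullet> (x k - xs))"
      by (rule mult_strict_left_mono[OF gt]) (use \<epsilon> D in simp)
    moreover have "(\<epsilon> / ?D) * (\<epsilon> * ?D) = \<epsilon>\<^sup>2" using D by (simp add: power2_eq_square)
    ultimately show ?thesis using up by simp
  qed
  have part2: "Max ((\<lambda>k. g (x k)) ` I) \<le> Mg * \<epsilon> + \<delta>" if ne: "I \<noteq> {}"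
  proof -
    have fin: "finite I" unfolding I_def' by simp
    have "\<forall>k\<in>I. g (x k) \<le> Mg * \<epsilon> + \<delta>"
    proof
      fix k assume "k \<in> I"
      hence k: "k < N" and pr: "productive nrm g gg \<epsilon> \<delta> (x k)" unfolding I_def' by auto
      have "dual_norm nrm (gg (x k)) \<le> Mg" using Mg xQ k by simp
      hence "\<epsilon> * dual_norm nrm (gg (x k)) \<le> \<epsilon> * Mg" using \<epsilon> by simp
      thus "g (x k) \<le> Mg * \<epsilon> + \<delta>" using pr unfolding productive_def by (simp add: mult.commute)
    qed
    thus ?thesis using fin ne by simp
  qed
  have part1: "I \<noteq> {} \<and> Min ((\<lambda>k. v_delta nrm gf (x k) xs) ` I) \<le> \<epsilon>"
  proof (rule ccontr)
    assume H: "\<not> ?thesis"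
    have fin: "finite I" unfolding I_def' by simp
    have allv: "\<forall>k\<in>I. v_delta nrm gf (x k) xs > \<epsilon>"
    proof (cases "I = {}")
      case True then show ?thesis by simp
    next
      case False
      hence "Min ((\<lambda>k. v_delta nrm gf (x k) xs) ` I) > \<epsilon>" using H by simp
      thus ?thesis using fin False by simp
    qed
    have stepk: "V k - V (Suc k) > \<epsilon>\<^sup>2 / 2" if k: "k < N" for k
    proof (cases "productive nrm g gg \<epsilon> \<delta> (x k)")
      case True
      hence "k \<in> I" using k unfolding I_def' by simp
      hence "\<epsilon> * v_delta nrm gf (x k) xs > \<epsilon> * \<epsilon>" using allv \<epsilon> by simp
      thus ?thesis using prodk[OF k True] by (simp add: power2_eq_square)
    next
      case False then show ?thesis using nonprodk[OF k False] by simp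
    qed
    have acc: "n \<le> N \<Longrightarrow> 0 < n \<Longrightarrow> V 0 - V n > real n * \<epsilon>\<^sup>2 / 2" for n
    proof (induction n)
      case 0 then show ?case by simp
    next
      case (Suc n)
      show ?case
      proof (cases "n = 0")
        case True then show ?thesis using stepk[of 0] Suc.prems by simp
      next
        case False
        hence "V 0 - V n > real n * \<epsilon>\<^sup>2 / 2" using Suc by simp
        moreover have "V n - V (Suc n) > \<epsilon>\<^sup>2 / 2" using stepk Suc.prems by simp
        ultimately show ?thesis by (simp add: algebra_simps add_divide_distrib)
      qed
    qed
    have "V 0 - V N > real N * \<epsilon>\<^sup>2 / 2" using acc Npos by simp
    moreover have "V N \<ge> 0"
    proof -
      have "V N \<ge> (nrm (xs - x N))\<^sup>2 / 2" unfolding V_def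
        by (rule breg_lb[OF Q(2) sol(1) xQ d_diff d_sc]) simp
      thus ?thesis by (smt (verit) zero_le_power2 divide_nonneg_nonneg)
    qed
    moreover have "V 0 \<le> \<Theta>0\<^sup>2" using \<Theta>0 unfolding V_def by simp
    ultimately show False using NT by linarith
  qed
  show ?thesis using part1 part2 by blast
qed

end
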